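(* Let $K$ be a field of characteristic $0$. Let $m=x_1^{\alpha_1}\cdots x_n^{\alpha_n}$ be a monomial with $\alpha_i\ge 1$ for all $i$, let $f\in K[x_1,\ldots,x_n]$ be a homogeneous polynomial of degree $d=\alpha_1+\cdots+\alpha_n$, and let $A\in GL_n(K)$ be an invertible matrix. The following two properties are equivalent: (i) $m(A.x)=c\cdot f(x)$ for some constant $c\in K$; (ii) $\mathfrak{g}_f=A^{-1}\,\mathfrak{g}_m\,A$.
   Context: For $P\in K[x_1,\ldots,x_n]$, the Lie algebra $\mathfrak{g}_P$ of $P$ is the Lie algebra (tangent space at the identity) of the group of invariants $\{A\in GL_n(K): P(A.x)=P(x)\}$; equivalently, $\mathfrak{g}_P$ is the linear subspace of matrices $A=(a_{ij})\in M_n(K)$ such that $\sum_{i,j\in[n]} a_{ij}\,x_j\,\frac{\partial P}{\partial x_i}=0$. Here $A.x$ denotes the matrix-vector product, so $P(A.x)$ is the polynomial obtained from $P$ by the linear change of variables $x\mapsto Ax$. *)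

theory Defs
  imports "HOL-Analysis.Analysis" "HOL-Library.Poly_Mapping"
begin

type_synonym ('n, 'a) mpoly = "('n \<Rightarrow>\<^sub>0 nat) \<Rightarrow>\<^sub>0 'a"

definition Const :: "'a::comm_semiring_1 \<Rightarrow> ('n, 'a) mpoly" where
  "Const c = Poly_Mapping.single 0 c"

definition Var :: "'n \<Rightarrow> ('n, 'a::comm_semiring_1) mpoly" where
  "Var i = Poly_Mapping.single (Poly_Mapping.single i 1) 1"

definition monomial_of :: "('n::finite \<Rightarrow> nat) \<Rightarrow> ('n, 'a::comm_semiring_1) mpoly" where
  "monomial_of \<alpha> = (\<Prod>i\<in>UNIV. Var i ^ \<alpha> i)"

definition homogeneous :: "nat \<Rightarrow> ('n::finite, 'a::zero) mpoly \<Rightarrow> bool" where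
  "homogeneous d p \<longleftrightarrow> (\<forall>\<mu>\<in>Poly_Mapping.keys p. (\<Sum>i\<in>UNIV. Poly_Mapping.lookup \<mu> i) = d)"

definition subst :: "('n \<Rightarrow> ('m, 'a) mpoly) \<Rightarrow> ('n, 'a::comm_semiring_1) mpoly \<Rightarrow> ('m, 'a) mpoly" where
  "subst \<sigma> p = (\<Sum>\<mu>\<in>Poly_Mapping.keys p. Const (Poly_Mapping.lookup p \<mu>) * (\<Prod>i\<in>Poly_Mapping.keys \<mu>. \<sigma> i ^ Poly_Mapping.lookup \<mu> i))"

text \<open>P(A.x): the linear change of variables x \<mapsto> A x, i.e. x_i \<mapsto> sum_j a_ij x_j.\<close>
definition lin_change :: "'a^'n^'n \<Rightarrow> ('n::finite, 'a::comm_semiring_1) mpoly \<Rightarrow> ('n, 'a) mpoly" where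
  "lin_change A p = subst (\<lambda>i. \<Sum>j\<in>UNIV. Const (A $ i $ j) * Var j) p"

definition pdiff :: "'n \<Rightarrow> ('n, 'a::comm_semiring_1) mpoly \<Rightarrow> ('n, 'a) mpoly" where
  "pdiff i p = (\<Sum>\<mu>\<in>Poly_Mapping.keys p. Poly_Mapping.single (\<mu> - Poly_Mapping.single i 1)
                                 (of_nat (Poly_Mapping.lookup \<mu> i) * Poly_Mapping.lookup p \<mu>))"

definition lie_alg :: "('n::finite, 'a::comm_ring_1) mpoly \<Rightarrow> ('a^'n^'n) set" where
  "lie_alg P = {A. (\<Sum>i\<in>UNIV. \<Sum>j\<in>UNIV. Const (A $ i $ j) * Var j * pdiff i P) = 0}"

end

theory Submission
  imports Defs
begin


abbreviation (input) lk where "lk \<equiv> Poly_Mapping.lookup"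
abbreviation (input) ks where "ks \<equiv> Poly_Mapping.keys"
abbreviation (input) sg where "sg \<equiv> Poly_Mapping.single"

lemma pm_expand: "(p::'k \<Rightarrow>\<^sub>0 'b::comm_monoid_add) = (\<Sum>\<mu>\<in>ks p. sg \<mu> (lk p \<mu>))"
proof (rule poly_mapping_eqI)
  fix k
  have "lk (\<Sum>\<mu>\<in>ks p. sg \<mu> (lk p \<mu>)) k = (\<Sum>\<mu>\<in>ks p. if \<mu> = k then lk p \<mu> else 0)"
    by (simp add: lookup_sum lookup_single when_def)
  also have "\<dots> = lk p k"
    by (simp add: in_keys_iff)
  finally show "lk p k = lk (\<Sum>\<mu>\<in>ks p. sg \<mu> (lk p \<mu>)) k" by simp
qed

lemma lookup_minus_nat: "lk (f - g) k = lk f k - lk (g :: 'k \<Rightarrow>\<^sub>0 nat) k"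
  by transfer simp

lemma add_hom_sum:
  assumes add: "\<And>p q. F (p + q) = F p + F q" and z: "F 0 = 0"
  shows "F (sum g S) = (\<Sum>x\<in>S. F (g x))"
proof (cases "finite S")
  case True then show ?thesis by induction (simp_all add: z add)
next
  case False then show ?thesis by (simp add: z)
qed

lemma add_hom_ext:
  fixes F G :: "('k \<Rightarrow>\<^sub>0 'b::comm_monoid_add) \<Rightarrow> 'c::comm_monoid_add"
  assumes "\<And>p q. F (p + q) = F p + F q" "F 0 = 0"
    and "\<And>p q. G (p + q) = G p + G q" "G 0 = 0"
    and "\<And>\<mu> c. F (sg \<mu> c) = G (sg \<mu> c)"
  shows "F p = G p"
proof -
  have "F p = F (\<Sum>\<mu>\<in>ks p. sg \<mu> (lk p \<mu>))" using pm_expand[of p] by simp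
  also have "\<dots> = (\<Sum>\<mu>\<in>ks p. F (sg \<mu> (lk p \<mu>)))" by (rule add_hom_sum) (use assms in auto)
  also have "\<dots> = (\<Sum>\<mu>\<in>ks p. G (sg \<mu> (lk p \<mu>)))" using assms by simp
  also have "\<dots> = G (\<Sum>\<mu>\<in>ks p. sg \<mu> (lk p \<mu>))" by (rule add_hom_sum[symmetric]) (use assms in auto)
  also have "\<dots> = G p" using pm_expand[of p] by simp
  finally show ?thesis .
qed

definition lift :: "('k \<Rightarrow> 'b \<Rightarrow> 'c::comm_monoid_add) \<Rightarrow> ('k \<Rightarrow>\<^sub>0 'b::zero) \<Rightarrow> 'c" where
  "lift h p = (\<Sum>\<mu>\<in>ks p. h \<mu> (lk p \<mu>))"

lemma lift_superset:
  assumes "finite S" "ks p \<subseteq> S" "\<And>\<mu>. h \<mu> 0 = 0"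
  shows "lift h p = (\<Sum>\<mu>\<in>S. h \<mu> (lk p \<mu>))"
  unfolding lift_def
  by (rule sum.mono_neutral_left) (use assms in \<open>auto simp: in_keys_iff\<close>)

lemma lift_add:
  assumes "\<And>\<mu>. h \<mu> 0 = 0" "\<And>\<mu> a b. h \<mu> (a + b) = h \<mu> a + h \<mu> b"
  shows "lift h (p + q) = lift h p + lift h (q :: 'k \<Rightarrow>\<^sub>0 'b::monoid_add)"
proof -
  let ?S = "ks p \<union> ks q"
  have "lift h (p + q) = (\<Sum>\<mu>\<in>?S. h \<mu> (lk (p+q) \<mu>))"
    by (rule lift_superset) (use assms keys_add[of p q] in auto)
  also have "\<dots> = (\<Sum>\<mu>\<in>?S. h \<mu> (lk p \<mu>)) + (\<Sum>\<mu>\<in>?S. h \<mu> (lk q \<mu>))"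
    by (simp add: lookup_add assms sum.distrib)
  also have "\<dots> = lift h p + lift h q"
    using lift_superset[of ?S p h] lift_superset[of ?S q h] assms by auto
  finally show ?thesis .
qed

lemma lift_zero: "lift h 0 = 0" by (simp add: lift_def)

lemma lift_single: assumes "\<And>\<mu>. h \<mu> 0 = 0" shows "lift h (sg \<mu> c) = h \<mu> c"
  using assms by (simp add: lift_def)



lemma Const_add: "Const (a + b) = Const a + (Const b :: ('n,'a::comm_semiring_1) mpoly)"
  by (simp add: Const_def single_add)
lemma Const_mult: "Const (a * b) = Const a * (Const b :: ('n,'a::comm_semiring_1) mpoly)"
  by (simp add: Const_def mult_single)
lemma Const_0[simp]: "Const 0 = (0 :: ('n,'a::comm_semiring_1) mpoly)"
  by (simp add: Const_def)
lemma Const_1[simp]: "Const 1 = (1 :: ('n,'a::comm_semiring_1) mpoly)"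
  by (rule poly_mapping_eqI) (simp add: Const_def lookup_one lookup_single when_def)
lemma Const_sum: "Const (sum g S) = (\<Sum>x\<in>S. Const (g x) :: ('n,'a::comm_semiring_1) mpoly)"
  by (rule add_hom_sum) (simp_all add: Const_add)
lemma Const_single: "Const c * sg \<mu> d = (sg \<mu> (c * d) :: ('n,'a::comm_semiring_1) mpoly)"
  by (simp add: Const_def mult_single)
lemma Const_minus: "Const (a - b) = Const a - (Const b :: ('n,'a::comm_ring_1) mpoly)"
  by (simp add: Const_def single_diff)
lemma lookup_Const_mult: "lk (Const c * p) \<mu> = c * lk (p :: ('n,'a::comm_semiring_1) mpoly) \<mu>"
proof -
  have "Const c * p = Poly_Mapping.map ((*) c) p"
    by (simp add: Const_def mult_map_scale_conv_mult)
  then show ?thesis by (simp add: Poly_Mapping.map.rep_eq when_def)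
qed

definition Mon :: "('n \<Rightarrow> ('m, 'a) mpoly) \<Rightarrow> ('n \<Rightarrow>\<^sub>0 nat) \<Rightarrow> ('m, 'a::comm_semiring_1) mpoly" where
  "Mon \<sigma> \<mu> = (\<Prod>i\<in>ks \<mu>. \<sigma> i ^ lk \<mu> i)"

lemma subst_lift: "subst \<sigma> p = lift (\<lambda>\<mu> c. Const c * Mon \<sigma> \<mu>) p"
  by (simp add: subst_def lift_def Mon_def)

lemma subst_add: "subst \<sigma> (p + q) = subst \<sigma> p + subst \<sigma> q"
  unfolding subst_lift by (rule lift_add) (simp_all add: Const_add distrib_right)
lemma subst_zero[simp]: "subst \<sigma> 0 = 0"
  unfolding subst_lift by (rule lift_zero)
lemma subst_single: "subst \<sigma> (sg \<mu> c) = Const c * Mon \<sigma> \<mu>"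
  unfolding subst_lift by (rule lift_single) simp

lemma Mon_UNIV: "Mon \<sigma> (\<mu> :: 'n::finite \<Rightarrow>\<^sub>0 nat) = (\<Prod>i\<in>UNIV. \<sigma> i ^ lk \<mu> i)"
  unfolding Mon_def by (rule prod.mono_neutral_left) (auto simp: in_keys_iff)

lemma Mon_add: "Mon \<sigma> ((\<mu> :: 'n::finite \<Rightarrow>\<^sub>0 nat) + \<nu>) = Mon \<sigma> \<mu> * Mon \<sigma> \<nu>"
  by (simp add: Mon_UNIV lookup_add power_add prod.distrib)

lemma subst_mult:
  fixes \<sigma> :: "'n::finite \<Rightarrow> ('m, 'a::comm_semiring_1) mpoly"
  shows "subst \<sigma> (p * q) = subst \<sigma> p * subst \<sigma> q"
proof -
  have single: "subst \<sigma> (sg \<mu> c * q) = subst \<sigma> (sg \<mu> c) * subst \<sigma> q" for \<mu> c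
  proof (rule add_hom_ext[where F="\<lambda>q. subst \<sigma> (sg \<mu> c * q)" and G="\<lambda>q. subst \<sigma> (sg \<mu> c) * subst \<sigma> q"])
    fix \<nu> d
    show "subst \<sigma> (sg \<mu> c * sg \<nu> d) = subst \<sigma> (sg \<mu> c) * subst \<sigma> (sg \<nu> d)"
      by (simp add: mult_single subst_single Mon_add Const_mult ac_simps)
  qed (simp_all add: subst_add distrib_left)
  show ?thesis
  proof (rule add_hom_ext[where F="\<lambda>p. subst \<sigma> (p * q)" and G="\<lambda>p. subst \<sigma> p * subst \<sigma> q"])
    fix \<mu> c show "subst \<sigma> (sg \<mu> c * q) = subst \<sigma> (sg \<mu> c) * subst \<sigma> q" by (rule single)
  qed (simp_all add: subst_add distrib_right)
qed

lemma subst_Const: "subst \<sigma> (Const c) = Const c"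
  by (simp add: Const_def subst_single Mon_def)

lemma subst_one: "subst \<sigma> 1 = 1"
  using subst_Const[of \<sigma> 1] by simp

lemma subst_Var: "subst \<sigma> (Var i) = \<sigma> i"
  by (simp add: Var_def subst_single Mon_def)

lemma subst_sum: "subst \<sigma> (sum g S) = (\<Sum>x\<in>S. subst \<sigma> (g x))"
  by (rule add_hom_sum) (simp_all add: subst_add)

lemma subst_power:
  fixes \<sigma> :: "'n::finite \<Rightarrow> ('m, 'a::comm_semiring_1) mpoly"
  shows "subst \<sigma> (p ^ k) = subst \<sigma> p ^ k"
  by (induction k) (simp_all add: subst_mult subst_one)

lemma subst_prod:
  fixes \<sigma> :: "'n::finite \<Rightarrow> ('m, 'a::comm_semiring_1) mpoly"
  shows "subst \<sigma> (prod g S) = (\<Prod>x\<in>S. subst \<sigma> (g x))"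
proof (cases "finite S")
  case True then show ?thesis by induction (simp_all add: subst_mult subst_one)
next
  case False then show ?thesis by (simp add: subst_one)
qed

lemma subst_minus:
  fixes \<sigma> :: "'n::finite \<Rightarrow> ('m, 'a::comm_ring_1) mpoly"
  shows "subst \<sigma> (p - q) = subst \<sigma> p - subst \<sigma> q"
  using subst_add[of \<sigma> "p - q" q] by (simp add: algebra_simps)

lemma pdiff_lift: "pdiff i p = lift (\<lambda>\<mu> c. sg (\<mu> - sg i 1) (of_nat (lk \<mu> i) * c)) p"
  by (simp add: pdiff_def lift_def)
lemma pdiff_add: "pdiff i (p + q) = pdiff i p + pdiff i q"
  unfolding pdiff_lift by (rule lift_add) (simp_all add: distrib_left single_add)
lemma pdiff_zero[simp]: "pdiff i 0 = 0"
  unfolding pdiff_lift by (rule lift_zero)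
lemma pdiff_single: "pdiff i (sg \<mu> c) = sg (\<mu> - sg i 1) (of_nat (lk \<mu> i) * c)"
  unfolding pdiff_lift by (rule lift_single) simp
lemma pdiff_sum: "pdiff i (sum g S) = (\<Sum>x\<in>S. pdiff i (g x))"
  by (rule add_hom_sum) (simp_all add: pdiff_add)

lemma shift_eq:
  "sg (\<mu> - sg i 1 + \<nu>) (of_nat (lk \<mu> i) * x) = sg (\<mu> + \<nu> - sg i 1) (of_nat (lk \<mu> i) * x :: 'a::comm_semiring_1)"
proof (cases "lk \<mu> i = 0")
  case False
  have "\<mu> - sg i 1 + \<nu> = \<mu> + \<nu> - sg i (1::nat)"
    by (rule poly_mapping_eqI) (use False in \<open>auto simp: lookup_add lookup_minus_nat lookup_single when_def\<close>)
  then show ?thesis by simp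
qed simp

lemma pdiff_mult:
  fixes p q :: "('n, 'a::comm_semiring_1) mpoly"
  shows "pdiff i (p * q) = pdiff i p * q + p * pdiff i q"
proof -
  have ss: "pdiff i (sg \<mu> c * sg \<nu> d) = pdiff i (sg \<mu> c) * sg \<nu> d + sg \<mu> c * pdiff i (sg \<nu> d)"
    for \<mu> \<nu> :: "'n \<Rightarrow>\<^sub>0 nat" and c d :: 'a
  proof -
    have "pdiff i (sg \<mu> c) * sg \<nu> d = sg (\<mu> + \<nu> - sg i 1) (of_nat (lk \<mu> i) * (c * d))"
      using shift_eq[of \<mu> i \<nu> "c * d"] by (simp add: pdiff_single mult_single ac_simps)
    moreover have "sg \<mu> c * pdiff i (sg \<nu> d) = sg (\<mu> + \<nu> - sg i 1) (of_nat (lk \<nu> i) * (c * d))"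
      using shift_eq[of \<nu> i \<mu> "c * d"] by (simp add: pdiff_single mult_single ac_simps)
    ultimately show ?thesis
      by (simp add: pdiff_single mult_single lookup_add single_add[symmetric] distrib_right)
  qed
  have single: "pdiff i (sg \<mu> c * q) = pdiff i (sg \<mu> c) * q + sg \<mu> c * pdiff i q" for \<mu> c
    by (rule add_hom_ext[where F="\<lambda>q. pdiff i (sg \<mu> c * q)" and G="\<lambda>q. pdiff i (sg \<mu> c) * q + sg \<mu> c * pdiff i q"])
       (simp_all add: pdiff_add distrib_left ss add_ac)
  show ?thesis
    by (rule add_hom_ext[where F="\<lambda>p. pdiff i (p * q)" and G="\<lambda>p. pdiff i p * q + p * pdiff i q"])
       (simp_all add: pdiff_add distrib_right single add_ac)
qed

lemma pdiff_Const[simp]: "pdiff i (Const c) = 0"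
  by (simp add: Const_def pdiff_single)

lemma pdiff_Var: "pdiff i (Var j :: ('n,'a::comm_semiring_1) mpoly) = (if i = j then 1 else 0)"
  by (simp add: Var_def pdiff_single lookup_single when_def)



lemma Var_power: "Var i ^ k = (sg (sg i k) 1 :: ('n,'a::comm_semiring_1) mpoly)"
proof (induction k)
  case 0 then show ?case by (simp add: Const_def[symmetric])
next
  case (Suc k) then show ?case
    by (simp add: Var_def mult_single single_add[symmetric] add.commute)
qed

lemma prod_singles:
  "(\<Prod>i\<in>S. sg (\<nu> i) 1) = (sg (sum \<nu> S) 1 :: ('n,'a::comm_semiring_1) mpoly)"
proof (cases "finite S")
  case True then show ?thesis
    by induction (simp_all add: Const_def[symmetric] mult_single)
next
  case False then show ?thesis by (simp add: Const_def[symmetric])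
qed

lemma expo_expand: "(\<mu> :: 'n::finite \<Rightarrow>\<^sub>0 nat) = (\<Sum>i\<in>UNIV. sg i (lk \<mu> i))"
  by (rule poly_mapping_eqI) (simp add: lookup_sum lookup_single when_def)

lemma single_as_mon:
  "sg \<mu> c = Const c * (\<Prod>i\<in>UNIV. Var i ^ lk \<mu> i :: ('n::finite,'a::comm_semiring_1) mpoly)"
  by (simp add: Var_power prod_singles expo_expand[symmetric] Const_single)

lemma mpoly_closure:
  fixes Q :: "('n::finite,'a::comm_semiring_1) mpoly \<Rightarrow> bool"
  assumes C: "\<And>c. Q (Const c)" and V: "\<And>i. Q (Var i)"
    and M: "\<And>p q. Q p \<Longrightarrow> Q q \<Longrightarrow> Q (p * q)"
    and A: "\<And>p q. Q p \<Longrightarrow> Q q \<Longrightarrow> Q (p + q)"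
  shows "Q p"
proof -
  have Q0: "Q 0" using C[of 0] by simp
  have Q1: "Q 1" using C[of 1] by simp
  have pw: "Q (Var i ^ k)" for i k by (induction k) (simp_all add: Q1 M V)
  have pr: "Q (\<Prod>i\<in>S. Var i ^ g i)" for S :: "'n set" and g
  proof -
    have "finite S" by simp
    then show ?thesis by induction (simp_all add: Q1 M pw)
  qed
  have sgl: "Q (sg \<mu> c)" for \<mu> c
    using single_as_mon[of \<mu> c] M[OF C pr] by simp
  have sm: "Q (sum g S)" if "\<And>x. Q (g x)" for g :: "_ \<Rightarrow> ('n,'a) mpoly" and S :: "'x set"
  proof (cases "finite S")
    case True then show ?thesis by induction (simp_all add: Q0 A that)
  qed (simp add: Q0)
  show ?thesis using pm_expand[of p] sm[of "\<lambda>\<mu>. sg \<mu> (lk p \<mu>)" "ks p"] sgl by simp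
qed

definition Dop :: "'a^'n^'n \<Rightarrow> ('n::finite, 'a::comm_ring_1) mpoly \<Rightarrow> ('n, 'a) mpoly" where
  "Dop B P = (\<Sum>i\<in>UNIV. \<Sum>j\<in>UNIV. Const (B $ i $ j) * Var j * pdiff i P)"

lemma lie_alg_Dop: "lie_alg P = {B. Dop B P = 0}"
  by (simp add: lie_alg_def Dop_def)

lemma Dop_add: "Dop B (p + q) = Dop B p + Dop B q"
  by (simp add: Dop_def pdiff_add distrib_left sum.distrib)
lemma Dop_zero[simp]: "Dop B 0 = 0"
  by (simp add: Dop_def)
lemma Dop_mult: "Dop B (p * q) = Dop B p * q + p * Dop B q"
  by (simp add: Dop_def pdiff_mult distrib_left sum.distrib sum_distrib_left sum_distrib_right ac_simps)
lemma Dop_Const[simp]: "Dop B (Const c) = 0"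
  by (simp add: Dop_def)
lemma Dop_Const_mult: "Dop B (Const c * p) = Const c * Dop B p"
  by (simp add: Dop_mult)
lemma sum_if_eq: "(\<Sum>i\<in>(UNIV::'n set). \<Sum>j\<in>UNIV. if i = k then g j else 0) = (\<Sum>j\<in>(UNIV::'n::finite set). (g j :: 'b::comm_monoid_add))"
  by (subst sum.swap) (simp add: sum.delta)

lemma if01_mult: "(if P then 1 else 0) * (x::'b::semiring_1) = (if P then x else 0)" by simp

lemma Dop_Var: "Dop B (Var k) = (\<Sum>j\<in>UNIV. Const (B $ k $ j) * Var j)"
  by (simp add: Dop_def pdiff_Var if_distrib[of "\<lambda>x. _ * x"] sum_if_eq cong: if_cong)
lemma Dop_sum: "Dop B (sum g S) = (\<Sum>x\<in>S. Dop B (g x))"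
  by (rule add_hom_sum) (simp_all add: Dop_add)

abbreviation sig :: "'a^'n^'n \<Rightarrow> 'n::finite \<Rightarrow> ('n, 'a::comm_ring_1) mpoly" where
  "sig A \<equiv> (\<lambda>i. \<Sum>j\<in>UNIV. Const (A $ i $ j) * Var j)"

lemma lin_add: "lin_change A (p + q) = lin_change A p + lin_change A q"
  by (simp add: lin_change_def subst_add)
lemma lin_zero[simp]: "lin_change A 0 = 0"
  by (simp add: lin_change_def)
lemma lin_mult: "lin_change A (p * q) = lin_change A p * lin_change A q"
  by (simp add: lin_change_def subst_mult)
lemma lin_Const: "lin_change A (Const c) = Const c"
  by (simp add: lin_change_def subst_Const)
lemma lin_Var: "lin_change A (Var k) = (\<Sum>j\<in>UNIV. Const (A $ k $ j) * Var j)"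
  by (simp add: lin_change_def subst_Var)
lemma lin_sum: "lin_change A (sum g S) = (\<Sum>x\<in>S. lin_change A (g x))"
  by (rule add_hom_sum) (simp_all add: lin_add)
lemma lin_Const_mult: "lin_change A (Const c * p) = Const c * lin_change A p"
  by (simp add: lin_mult lin_Const)

lemma lin_comp: "lin_change A (lin_change C p) = lin_change (C ** A) p"
proof (induction p rule: mpoly_closure)
  case (1 c) then show ?case by (simp add: lin_Const)
next
  case (2 k)
  have "lin_change A (lin_change C (Var k)) =
      (\<Sum>j\<in>UNIV. \<Sum>m\<in>UNIV. Const (C $ k $ j) * Const (A $ j $ m) * Var m)"
    by (simp add: lin_Var lin_sum lin_Const_mult sum_distrib_left mult.assoc)
  also have "\<dots> = (\<Sum>m\<in>UNIV. Const ((C ** A) $ k $ m) * Var m)"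
    by (subst sum.swap) (simp add: matrix_matrix_mult_def Const_sum Const_mult sum_distrib_right)
  finally show ?case by (simp add: lin_Var)
next
  case (3 p q) then show ?case by (simp add: lin_mult)
next
  case (4 p q) then show ?case by (simp add: lin_add)
qed

lemma lin_id: "lin_change (mat 1) p = p"
proof (induction p rule: mpoly_closure)
  case (1 c) then show ?case by (simp add: lin_Const)
next
  case (2 k) then show ?case by (simp add: lin_Var mat_def if_distrib[of Const] if01_mult cong: if_cong)
qed (simp_all add: lin_mult lin_add)

lemma chain:
  assumes "C ** A = A ** B"
  shows "Dop B (lin_change A p) = lin_change A (Dop C p)"
proof (induction p rule: mpoly_closure)
  case (1 c) then show ?case by (simp add: lin_Const)
next
  case (2 k)
  have "Dop B (lin_change A (Var k)) = (\<Sum>j\<in>UNIV. \<Sum>l\<in>UNIV. Const (A $ k $ j) * Const (B $ j $ l) * Var l)"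
    by (simp add: lin_Var Dop_sum Dop_Const_mult Dop_Var sum_distrib_left mult.assoc)
  also have "\<dots> = (\<Sum>l\<in>UNIV. Const ((A ** B) $ k $ l) * Var l)"
    by (subst sum.swap) (simp add: matrix_matrix_mult_def Const_sum Const_mult sum_distrib_right)
  also have "\<dots> = (\<Sum>l\<in>UNIV. Const ((C ** A) $ k $ l) * Var l)" using assms by simp
  also have "\<dots> = (\<Sum>j\<in>UNIV. \<Sum>m\<in>UNIV. Const (C $ k $ j) * Const (A $ j $ m) * Var m)"
    by (subst sum.swap) (simp add: matrix_matrix_mult_def Const_sum Const_mult sum_distrib_right)
  also have "\<dots> = lin_change A (Dop C (Var k))"
    by (simp add: Dop_Var lin_Var lin_sum lin_Const_mult sum_distrib_left mult.assoc)
  finally show ?case .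
next
  case (3 p q) then show ?case by (simp add: lin_mult Dop_mult lin_add)
next
  case (4 p q) then show ?case by (simp add: lin_add Dop_add)
qed



lemma Var_shift: "Var i * sg (\<mu> - sg i 1) (of_nat (lk \<mu> i) * c) = (sg \<mu> (of_nat (lk \<mu> i) * c) :: ('n,'a::comm_semiring_1) mpoly)"
proof (cases "lk \<mu> i = 0")
  case False
  have "sg i 1 + (\<mu> - sg i 1) = \<mu>"
    by (rule poly_mapping_eqI) (use False in \<open>auto simp: lookup_add lookup_minus_nat lookup_single when_def\<close>)
  then show ?thesis by (simp add: Var_def mult_single)
qed simp

lemma Dop_diag:
  fixes B :: "'a::comm_ring_1^'n::finite^'n"
  assumes diag: "\<And>i j. i \<noteq> j \<Longrightarrow> B $ i $ j = 0"
  shows "lk (Dop B p) \<nu> = (\<Sum>i\<in>UNIV. B $ i $ i * of_nat (lk \<nu> i)) * lk p \<nu>"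
proof (rule add_hom_ext[where F="\<lambda>p. lk (Dop B p) \<nu>" and G="\<lambda>p. (\<Sum>i\<in>UNIV. B $ i $ i * of_nat (lk \<nu> i)) * lk p \<nu>"])
  fix \<mu> c
  have inner: "(\<Sum>j\<in>UNIV. Const (B $ i $ j) * Var j * X) = Const (B $ i $ i) * Var i * X" for i and X :: "('n,'a) mpoly"
    by (subst sum.remove[of UNIV i]) (auto simp: diag intro!: sum.neutral)
  have "Dop B (sg \<mu> c) = (\<Sum>i\<in>UNIV. sg \<mu> (B $ i $ i * (of_nat (lk \<mu> i) * c)))"
    unfolding Dop_def pdiff_single inner unfolding mult.assoc Var_shift Const_single ..
  then show "lk (Dop B (sg \<mu> c)) \<nu> = (\<Sum>i\<in>UNIV. B $ i $ i * of_nat (lk \<nu> i)) * lk (sg \<mu> c) \<nu>"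
    by (cases "\<mu> = \<nu>") (simp_all add: lookup_sum lookup_single sum_distrib_left sum_distrib_right ac_simps)
qed (simp_all add: Dop_add lookup_add distrib_left)



lemma Const_cancel:
  assumes "(c::'a::field) \<noteq> 0" "Const c * p = (0 :: ('n,'a) mpoly)" shows "p = 0"
proof -
  have "p = Const (inverse c) * (Const c * p)"
    using assms(1) by (simp add: mult.assoc[symmetric] Const_mult[symmetric])
  then show ?thesis using assms(2) by simp
qed

lemma Const_inv:
  assumes "(c::'a::field) \<noteq> 0" shows "Const (inverse c) * (Const c * p) = (p :: ('n,'a) mpoly)"
  using assms by (simp add: mult.assoc[symmetric] Const_mult[symmetric])

lemma lookup_Const: "lk (Const c) \<nu> = (if \<nu> = 0 then c else 0)"
  by (simp add: Const_def lookup_single when_def)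

theorem theorem1:
  fixes \<alpha> :: "'n::finite \<Rightarrow> nat"
    and f :: "('n, 'a::field_char_0) mpoly"
    and A :: "'a^'n^'n"
  assumes "\<forall>i. \<alpha> i \<ge> 1"
    and "homogeneous (\<Sum>i\<in>UNIV. \<alpha> i) f"
    and "invertible A"
  shows "(\<exists>c. lin_change A (monomial_of \<alpha>) = Const c * f)
     \<longleftrightarrow> lie_alg f = (\<lambda>B. matrix_inv A ** B ** A) ` lie_alg (monomial_of \<alpha>)"
proof -
  define Ai where "Ai = matrix_inv A"
  define m :: "('n,'a) mpoly" where "m = monomial_of \<alpha>"
  define d where "d = (\<Sum>i\<in>UNIV. \<alpha> i)"
  define L where "L = lin_change A"
  have AAi: "A ** Ai = mat 1 \<and> Ai ** A = mat 1"
    using assms(3) unfolding Ai_def matrix_inv_def invertible_def by (rule someI_ex)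
  have LiL: "lin_change Ai (L p) = p" for p
    using AAi by (simp add: L_def lin_comp lin_id)
  have LLi: "L (lin_change Ai p) = p" for p
    using AAi by (simp add: L_def lin_comp lin_id)
  have L_zero: "L 0 = 0" by (simp add: L_def)
  have L0: "L p = 0 \<Longrightarrow> p = 0" for p using LiL[of p] by simp
  have conjB: "Ai ** (A ** B ** Ai) ** A = B" for B
  proof -
    have "Ai ** (A ** B ** Ai) ** A = (Ai ** A) ** B ** (Ai ** A)" by (simp add: matrix_mul_assoc)
    then show ?thesis using AAi by simp
  qed
  have conjC: "A ** (Ai ** C ** A) ** Ai = C" for C
  proof -
    have "A ** (Ai ** C ** A) ** Ai = (A ** Ai) ** C ** (A ** Ai)" by (simp add: matrix_mul_assoc)
    then show ?thesis using AAi by simp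
  qed
  have chainA: "Dop B (L p) = L (Dop (A ** B ** Ai) p)" for B p
    unfolding L_def
  proof (rule chain)
    have "(A ** B) ** (Ai ** A) = A ** B" using AAi by simp
    then show "A ** B ** Ai ** A = A ** B" by (simp add: matrix_mul_assoc)
  qed
  have key: "Dop B (Const k * L p) = 0 \<longleftrightarrow> Dop (A ** B ** Ai) p = 0" if "k \<noteq> 0" for B p k
  proof
    assume "Dop B (Const k * L p) = 0"
    then have "Const k * L (Dop (A ** B ** Ai) p) = 0"
      by (simp add: Dop_Const_mult chainA)
    then have "L (Dop (A ** B ** Ai) p) = 0" by (rule Const_cancel[OF that])
    then show "Dop (A ** B ** Ai) p = 0" by (rule L0)
  qed (simp add: Dop_Const_mult chainA L_zero)
  define \<alpha>' where "\<alpha>' = (\<Sum>i\<in>UNIV. sg i (\<alpha> i))"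
  have lk\<alpha>': "lk \<alpha>' i = \<alpha> i" for i
    by (simp add: \<alpha>'_def lookup_sum lookup_single when_def)
  have m_eq: "m = sg \<alpha>' 1"
    by (simp add: m_def monomial_of_def Var_power prod_singles \<alpha>'_def)
  have lkm: "lk m \<nu> = (if \<nu> = \<alpha>' then 1 else 0)" for \<nu>
    by (simp add: m_eq lookup_single when_def)
  have m0: "m \<noteq> 0" using lkm[of \<alpha>'] by auto
  have dpos: "d > 0"
  proof -
    have "\<alpha> undefined \<le> d" unfolding d_def by (rule member_le_sum) auto
    moreover have "1 \<le> \<alpha> undefined" using assms(1) by simp
    ultimately show ?thesis by linarith
  qed
  have Im: "Dop (mat 1) m \<noteq> 0"
  proof
    assume "Dop (mat 1) m = 0"
    then have "lk (Dop (mat 1) m) \<alpha>' = 0" by simp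
    then have "(\<Sum>i\<in>UNIV. of_nat (\<alpha> i) :: 'a) = 0"
      by (subst (asm) Dop_diag) (auto simp: mat_def lkm lk\<alpha>')
    then have "(of_nat d :: 'a) = 0" by (simp add: d_def)
    then show False using dpos by simp
  qed
  show ?thesis
  proof
    assume "\<exists>c. lin_change A (monomial_of \<alpha>) = Const c * f"
    then obtain c where hc: "L m = Const c * f" by (auto simp: L_def m_def)
    have "L m \<noteq> 0" using m0 L0 by blast
    then have c0: "c \<noteq> 0" using hc by auto
    have f_eq: "f = Const (inverse c) * L m" using hc Const_inv[OF c0, of f] by simp
    have ic0: "inverse c \<noteq> 0" using c0 by simp
    have memb: "B \<in> lie_alg f \<longleftrightarrow> A ** B ** Ai \<in> lie_alg m" for B
      unfolding lie_alg_Dop f_eq using key[OF ic0] by simp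
    show "lie_alg f = (\<lambda>B. matrix_inv A ** B ** A) ` lie_alg (monomial_of \<alpha>)"
      unfolding Ai_def[symmetric] m_def[symmetric]
    proof (intro set_eqI iffI)
      fix B assume hB: "B \<in> lie_alg f"
      show "B \<in> (\<lambda>B. Ai ** B ** A) ` lie_alg m"
        by (rule image_eqI[of _ _ "A ** B ** Ai"]) (use memb conjB hB in auto)
    next
      fix B assume "B \<in> (\<lambda>B. Ai ** B ** A) ` lie_alg m"
      then obtain C where "C \<in> lie_alg m" "B = Ai ** C ** A" by auto
      then show "B \<in> lie_alg f" using memb conjC by simp
    qed
  next
    assume H: "lie_alg f = (\<lambda>B. matrix_inv A ** B ** A) ` lie_alg (monomial_of \<alpha>)"
    then have H': "lie_alg f = (\<lambda>B. Ai ** B ** A) ` lie_alg m" by (simp add: Ai_def m_def)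
    define h where "h = lin_change Ai f"
    have fh: "f = L h" by (simp add: h_def LLi)
    have hmem: "Dop C h = 0" if "C \<in> lie_alg m" for C
    proof -
      have "Ai ** C ** A \<in> lie_alg f" using H' that by auto
      then have "Dop (Ai ** C ** A) (Const 1 * L h) = 0" by (simp add: lie_alg_Dop fh)
      then show ?thesis using key[of 1] conjC by simp
    qed
    have Ef: "Dop (mat 1) f = Const (of_nat d) * f"
    proof (rule poly_mapping_eqI)
      fix \<nu>
      have "lk (Dop (mat 1) f) \<nu> = (\<Sum>i\<in>UNIV. of_nat (lk \<nu> i)) * lk f \<nu>"
        by (subst Dop_diag) (auto simp: mat_def)
      also have "\<dots> = of_nat d * lk f \<nu>"
      proof (cases "lk f \<nu> = 0")
        case False
        then have "\<nu> \<in> ks f" by (simp add: in_keys_iff)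
        then have hd: "(\<Sum>i\<in>UNIV. lk \<nu> i) = d" using assms(2) by (simp add: homogeneous_def d_def)
        show ?thesis by (simp only: of_nat_sum[symmetric] hd)
      qed simp
      finally show "lk (Dop (mat 1) f) \<nu> = lk (Const (of_nat d) * f) \<nu>"
        by (simp add: lookup_Const_mult)
    qed
    have Eh: "Dop (mat 1) h = Const (of_nat d) * h"
    proof -
      have c1: "Dop (mat 1) (L h) = L (Dop (mat 1) h)"
        using chainA[of "mat 1" h] AAi by simp
      have c2: "L (Const (of_nat d) * h) = Const (of_nat d) * L h"
        by (simp add: L_def lin_Const_mult)
      have "L (Dop (mat 1) h) = L (Const (of_nat d) * h)"
        using Ef unfolding fh c1 c2 .
      then have "lin_change Ai (L (Dop (mat 1) h)) = lin_change Ai (L (Const (of_nat d) * h))" by simp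
      then show ?thesis by (simp only: LiL)
    qed
    have deg: "(\<Sum>i\<in>UNIV. lk \<nu> i) = d" if "\<nu> \<in> ks h" for \<nu>
    proof -
      have nz: "lk h \<nu> \<noteq> 0" using that by (simp add: in_keys_iff)
      have "lk (Dop (mat 1) h) \<nu> = lk (Const (of_nat d) * h) \<nu>" using Eh by simp
      then have "(\<Sum>i\<in>UNIV. of_nat (lk \<nu> i)) * lk h \<nu> = of_nat d * lk h \<nu>"
        by (subst (asm) Dop_diag) (auto simp: mat_def lookup_Const_mult)
      then have "(\<Sum>i\<in>UNIV. of_nat (lk \<nu> i)) = (of_nat d :: 'a)" using nz by simp
      then show ?thesis by (simp only: of_nat_sum[symmetric] of_nat_eq_iff)
    qed
    have ratio: "\<alpha> j * lk \<nu> i = \<alpha> i * lk \<nu> j" if "\<nu> \<in> ks h" for \<nu> i j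
    proof -
      define lam :: "'n \<Rightarrow> 'a" where "lam = (\<lambda>k. (if k = i then of_nat (\<alpha> j) else 0) - (if k = j then of_nat (\<alpha> i) else 0))"
      define Lam :: "'a^'n^'n" where "Lam = (\<chi> k l. if k = l then lam k else 0)"
      have sumlam: "(\<Sum>k\<in>UNIV. lam k * of_nat (x k)) = of_nat (\<alpha> j) * of_nat (x i) - of_nat (\<alpha> i) * of_nat (x j)" for x
        by (simp add: lam_def left_diff_distrib sum_subtractf if_distrib[of "\<lambda>t. t * _"] cong: if_cong)
      have LamD: "lk (Dop Lam p) \<mu> = (\<Sum>k\<in>UNIV. lam k * of_nat (lk \<mu> k)) * lk p \<mu>" for p \<mu>
        by (subst Dop_diag) (auto simp: Lam_def)
      have "Dop Lam m = 0"
      proof (rule poly_mapping_eqI)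
        fix \<mu> show "lk (Dop Lam m) \<mu> = lk 0 \<mu>"
          by (simp add: LamD lkm sumlam lk\<alpha>')
      qed
      then have "Dop Lam h = 0" using hmem by (simp add: lie_alg_Dop)
      then have "lk (Dop Lam h) \<nu> = 0" by simp
      then have "(of_nat (\<alpha> j) * of_nat (lk \<nu> i) - of_nat (\<alpha> i) * of_nat (lk \<nu> j) :: 'a) = 0"
        using that by (simp add: LamD sumlam in_keys_iff)
      then have "(of_nat (\<alpha> j * lk \<nu> i) :: 'a) = of_nat (\<alpha> i * lk \<nu> j)" by simp
      then show ?thesis by (simp only: of_nat_eq_iff)
    qed
    have keysh: "\<nu> = \<alpha>'" if "\<nu> \<in> ks h" for \<nu>
    proof (rule poly_mapping_eqI)
      fix i
      have "lk \<nu> i * d = (\<Sum>j\<in>UNIV. \<alpha> j * lk \<nu> i)" by (simp add: d_def sum_distrib_left sum_distrib_right mult.commute)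
      also have "\<dots> = (\<Sum>j\<in>UNIV. \<alpha> i * lk \<nu> j)" using ratio[OF that] by simp
      also have "\<dots> = \<alpha> i * d" using deg[OF that] by (simp flip: sum_distrib_left)
      finally have "lk \<nu> i * d = \<alpha> i * d" .
      then show "lk \<nu> i = lk \<alpha>' i" using dpos by (simp add: lk\<alpha>')
    qed
    define c0 where "c0 = lk h \<alpha>'"
    have h_eq: "h = Const c0 * m"
    proof (rule poly_mapping_eqI)
      fix \<nu>
      show "lk h \<nu> = lk (Const c0 * m) \<nu>"
        using keysh[of \<nu>] by (auto simp: lookup_Const_mult lkm c0_def in_keys_iff)
    qed
    have f_eq: "f = Const c0 * L m" by (simp add: fh h_eq L_def lin_Const_mult)
    have f0: "f \<noteq> 0"
    proof
      assume "f = 0"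
      then have "mat 1 \<in> lie_alg f" by (simp add: lie_alg_Dop)
      then obtain C where C: "C \<in> lie_alg m" "mat 1 = Ai ** C ** A" using H' by auto
      then have "C = mat 1" using conjC[of C] AAi C(2)[symmetric] by simp
      then show False using C(1) Im by (simp add: lie_alg_Dop)
    qed
    then have "c0 \<noteq> 0" using f_eq by auto
    then have "L m = Const (inverse c0) * f" using f_eq Const_inv[of c0 "L m"] by simp
    then show "\<exists>c. lin_change A (monomial_of \<alpha>) = Const c * f" by (auto simp: L_def m_def)
  qed
qed

end
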